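(* Let $q$ be a prime power and $h\ge 2$, $r\ge 1$ integers. Then the generalized cylinder conjecture is false for $(v,r,q^h)$ for every integer $v$ with $2h+r\le v\le 2h+r+q-2$; that is, for each such $v$ there exists a $(q^h)^r$-divisible spanning set of $(q^h)^{r+1}$ points in $\mathrm{PG}(v-1,q^h)$ that is not an $(r+1)$-cylinder.
   Context: For a prime power $Q$, $\mathrm{PG}(v-1,Q)$ is the projective space of $\mathbb{F}_Q^v$; a $k$-space is a $k$-dimensional subspace (points are $1$-spaces, hyperplanes $(v-1)$-spaces). A set $\mathcal{S}$ of points is spanning if its points span $\mathbb{F}_Q^v$, and it is $Q^r$-divisible if $|\mathcal{S}\cap H|\equiv|\mathcal{S}|\pmod{Q^r}$ for every hyperplane $H$. An $(r+1)$-cylinder over $\mathbb{F}_Q$ is a multiset of $Q^{r+1}$ points which arises as the union (counted with multiplicity) of the point sets $L_1\setminus F,\dots,L_Q\setminus F$, where $L_1,\dots,L_Q$ are $(r+1)$-spaces and $F$ is an $r$-space contained in every $L_i$. The generalized cylinder conjecture is true for $(v,r,Q)$ if every $Q^r$-divisible spanning set of $Q^{r+1}$ points in $\mathrm{PG}(v-1,Q)$ is an $(r+1)$-cylinder, and false otherwise. *)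

theory Defs
  imports Complex_Main "HOL-Library.Multiset" "HOL-Library.Function_Algebras" "HOL-Library.Cardinality" "HOL-Computational_Algebra.Primes"
begin

text \<open>The vector space F^v is modelled as functions nat => F vanishing outside {0..<v},
  with pointwise scalar multiplication.\<close>

definition smul :: "'a::field \<Rightarrow> (nat \<Rightarrow> 'a) \<Rightarrow> (nat \<Rightarrow> 'a)" where
  "smul c x = (\<lambda>i. c * x i)"

definition ambient :: "nat \<Rightarrow> (nat \<Rightarrow> 'a::field) set" where
  "ambient v = {x. \<forall>i\<ge>v. x i = 0}"

text \<open>k-spaces of PG(v-1,F): k-dimensional subspaces of F^v.\<close>
definition kspaces :: "nat \<Rightarrow> nat \<Rightarrow> (nat \<Rightarrow> 'a::field) set set" where
  "kspaces v k = {W. W \<subseteq> ambient v \<and> module.subspace smul W \<and> vector_space.dim smul W = k}"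

abbreviation points :: "nat \<Rightarrow> (nat \<Rightarrow> 'a::field) set set" where
  "points v \<equiv> kspaces v 1"

definition spanning :: "nat \<Rightarrow> (nat \<Rightarrow> 'a::field) set set \<Rightarrow> bool" where
  "spanning v S \<longleftrightarrow> module.span smul (\<Union>S) = ambient v"

definition divisible :: "nat \<Rightarrow> nat \<Rightarrow> (nat \<Rightarrow> 'a::field) set set \<Rightarrow> bool" where
  "divisible v m S \<longleftrightarrow>
     (\<forall>H \<in> kspaces v (v - 1). card {P \<in> S. P \<subseteq> H} mod m = card S mod m)"

definition is_cylinder :: "nat \<Rightarrow> nat \<Rightarrow> (nat \<Rightarrow> 'a::field) set multiset \<Rightarrow> bool" where
  "is_cylinder v r M \<longleftrightarrow>
     (\<exists>F L. F \<in> kspaces v r \<and>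
        (\<forall>i < CARD('a). L i \<in> kspaces v (r + 1) \<and> F \<subseteq> L i) \<and>
        M = (\<Sum>i < CARD('a). mset_set {P \<in> points v. P \<subseteq> L i \<and> \<not> P \<subseteq> F}))"

definition gen_cylinder_conj :: "'a::field itself \<Rightarrow> nat \<Rightarrow> nat \<Rightarrow> bool" where
  "gen_cylinder_conj TYPE('a) v r \<longleftrightarrow>
     (\<forall>S :: (nat \<Rightarrow> 'a) set set.
        S \<subseteq> points v \<and> card S = CARD('a) ^ (r + 1) \<and>
        divisible v (CARD('a) ^ r) S \<and> spanning v S
        \<longrightarrow> is_cylinder v r (mset_set S))"

end

theory Submission
  imports Defs "HOL-Number_Theory.Residues" "HOL-Computational_Algebra.Polynomial"
begin


lemma fiber_count:
  fixes f :: "'b::ab_group_add \<Rightarrow> 'c::ab_group_add"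
  assumes fin: "finite U" and z: "0 \<in> U"
    and sub: "\<And>x y. x\<in>U \<Longrightarrow> y\<in>U \<Longrightarrow> x - y \<in> U"
    and hom: "\<And>x y. x\<in>U \<Longrightarrow> y\<in>U \<Longrightarrow> f (x - y) = f x - f y"
  shows "card U = card (f ` U) * card {u\<in>U. f u = 0}"
proof -
  let ?K = "{u\<in>U. f u = 0}"
  have add: "x + y \<in> U" if "x\<in>U" "y\<in>U" for x y
    using sub[OF that(1) sub[OF z that(2)]] by simp
  have f0: "f 0 = 0" using hom[OF z z] by simp
  have fadd: "f (x + y) = f x + f y" if "x\<in>U" "y\<in>U" for x y
  proof -
    have "f (0 - y) = - f y" using hom[OF z that(2)] f0 by simp
    hence "f (x - (0 - y)) = f x + f y" using hom[OF that(1) sub[OF z that(2)]] by simp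
    thus ?thesis by simp
  qed
  have U: "U = (\<Union>g\<in>f ` U. {u\<in>U. f u = g})" by auto
  have "card U = (\<Sum>g\<in>f ` U. card {u\<in>U. f u = g})"
    by (subst U, rule card_UN_disjoint) (use fin in auto)
  also have "\<dots> = (\<Sum>g\<in>f ` U. card ?K)"
  proof (rule sum.cong[OF refl])
    fix g assume "g \<in> f ` U"
    then obtain u where u: "u \<in> U" "f u = g" by auto
    have "{u'\<in>U. f u' = g} = (\<lambda>k. u + k) ` ?K"
    proof (intro equalityI subsetI)
      fix x assume x: "x \<in> {u'\<in>U. f u' = g}"
      hence "x - u \<in> ?K" using sub[OF _ u(1), of x] hom[OF _ u(1), of x] u by auto
      moreover have "x = u + (x - u)" by simp
      ultimately show "x \<in> (\<lambda>k. u + k) ` ?K" by blast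
    next
      fix x assume "x \<in> (\<lambda>k. u + k) ` ?K"
      then obtain k where "k \<in> ?K" "x = u + k" by auto
      thus "x \<in> {u'\<in>U. f u' = g}" using add[OF u(1)] fadd[OF u(1)] u by auto
    qed
    also have "card \<dots> = card ?K" by (rule card_image) (auto intro: inj_onI)
    finally show "card {u'\<in>U. f u' = g} = card ?K" .
  qed
  also have "\<dots> = card (f ` U) * card ?K" by simp
  finally show ?thesis .
qed


lemma power_card_same:
  fixes x :: "'a::field"
  assumes fin: "finite (UNIV :: 'a set)"
  shows "x ^ card (UNIV :: 'a set) = x"
proof (cases "x = 0")
  case False
  define N where "N = card (UNIV :: 'a set)"
  have N0: "N > 0" using fin by (simp add: N_def finite_UNIV_card_ge_0)
  have cD: "card (UNIV - {0::'a}) = N - 1" using fin by (simp add: N_def card_Diff_singleton)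
  have "(\<Prod>y\<in>UNIV-{0}. x * y) = x ^ card (UNIV - {0::'a}) * \<Prod>(UNIV-{0})"
    by (simp add: prod.distrib)
  also have "(\<Prod>y\<in>UNIV-{0}. x * y) = (\<Prod>y\<in>UNIV-{0}. y)"
    by (rule prod.reindex_bij_witness[of _ "\<lambda>y. y / x" "\<lambda>y. x * y"]) (use False in auto)
  finally have e: "\<Prod>(UNIV-{0::'a}) = x ^ (N - 1) * \<Prod>(UNIV-{0})" using cD by simp
  have nz: "\<Prod>(UNIV-{0::'a}) \<noteq> 0" using fin by (simp add: prod_zero_iff)
  have "x ^ (N - 1) = 1" using e nz by (metis mult_cancel_right2)
  hence "x ^ Suc (N - 1) = x" by simp
  moreover have "Suc (N - 1) = N" using N0 by simp
  ultimately show ?thesis unfolding N_def by metis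
next
  case True
  have "card (UNIV :: 'a set) > 0" using fin by (simp add: finite_UNIV_card_ge_0)
  thus ?thesis using True by (simp add: power_0_left)
qed

lemma subfield_exists:
  assumes p: "prime p" and k: "k \<ge> 1" and q: "q = p^k" and h: "h \<ge> 1"
    and card: "CARD('a::field) = q^h"
  shows "\<exists>T::'a set. card T = q \<and> 0\<in>T \<and> 1\<in>T \<and>
     (\<forall>x\<in>T. \<forall>y\<in>T. x+y\<in>T \<and> x*y\<in>T \<and> x-y\<in>T) \<and> (\<forall>x\<in>T. inverse x \<in> T)"
proof -
  have p1: "p > 1" using p prime_gt_1_nat by blast
  have q1: "q > 1" using q k p1 by (metis one_less_power order_less_le_trans zero_less_one le_numeral_extra(4) less_one not_le)
  have cpos: "CARD('a) > 0" using card q1 by simp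
  hence fin: "finite (UNIV :: 'a set)" using card_ge_0_finite by blast
  have cp: "CHAR('a) > 0" using finite_imp_CHAR_pos[OF fin] .
  have cpr: "prime CHAR('a)" using prime_CHAR_semidom[OF cp] .
  have "CHAR('a) dvd p ^ (k*h)" using CHAR_dvd_CARD[where 'a='a] card q by (simp add: power_mult)
  hence "CHAR('a) dvd p" using prime_dvd_power cpr by blast
  hence ch: "CHAR('a) = p" using primes_dvd_imp_eq cpr p by blast
  have frob: "(x + y :: 'a) ^ (p^n) = x^(p^n) + y^(p^n)" for x y n
    using freshmans_dream'[of "p^n" n x y] cpr ch by simp
  have frobn: "(- x :: 'a) ^ (p^n) = - (x^(p^n))" for x n
  proof -
    have "(x + - x) ^ (p^n) = x^(p^n) + (-x)^(p^n)" by (rule frob)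
    moreover have "(x + - x :: 'a) ^ (p^n) = 0" using p1 by simp
    ultimately show ?thesis by (simp add: eq_neg_iff_add_eq_0 add.commute)
  qed
  have frobd: "(x - y :: 'a) ^ (p^n) = x^(p^n) - y^(p^n)" for x y n
    using frob[of x "-y" n] frobn[of y n] by simp
  have qpow: "q ^ j = p ^ (k*j)" for j using q by (simp add: power_mult)
  define T where "T = {x::'a. x ^ q = x}"
  define \<psi> where "\<psi> = (\<lambda>x::'a. x ^ q - x)"
  have psid: "\<psi> (x - y) = \<psi> x - \<psi> y" for x y
    using frobd[of x y k] q by (simp add: \<psi>_def algebra_simps)
  have fc: "card (UNIV::'a set) = card (range \<psi>) * card {x. \<psi> x = 0}"
    using fiber_count[of UNIV \<psi>] fin psid by simp
  have Tpsi: "{x. \<psi> x = 0} = T" by (auto simp: \<psi>_def T_def)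
  define P :: "'a poly" where "P = monom 1 q - monom 1 1"
  have polyP: "poly P x = x ^ q - x" for x by (simp add: P_def poly_monom)
  have P0: "P \<noteq> 0"
  proof
    assume "P = 0"
    hence "coeff P q = 0" by simp
    thus False using q1 by (simp add: P_def)
  qed
  have degP: "degree P \<le> q" unfolding P_def
    by (rule degree_diff_le, rule degree_monom_le, rule order_trans[OF degree_monom_le]) (use q1 in simp)
  have "card T \<le> q"
  proof -
    have "T = {x. poly P x = 0}" by (auto simp: T_def polyP)
    hence "card T \<le> degree P" using card_poly_roots_bound[OF P0] by simp
    thus ?thesis using degP by simp
  qed
  define Tr :: "'a poly" where "Tr = (\<Sum>j<h. monom 1 (q^j))"
  have polyTr: "poly Tr y = (\<Sum>j<h. y ^ (q^j))" for y by (simp add: Tr_def poly_sum poly_monom)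
  have Tr0: "Tr \<noteq> 0"
  proof
    assume "Tr = 0"
    hence "coeff Tr (q^(h-1)) = 0" by simp
    moreover have "coeff Tr (q^(h-1)) = (\<Sum>j<h. if j = h - 1 then 1 else 0)"
      unfolding Tr_def coeff_sum coeff_monom
      by (rule sum.cong[OF refl]) (use q1 power_inject_exp in auto)
    moreover have "(\<Sum>j<h. (if j = h - 1 then 1 else 0::'a)) = 1" using h by simp
    ultimately show False by simp
  qed
  have degTr: "degree Tr \<le> q^(h-1)" unfolding Tr_def
  proof (rule degree_sum_le)
    fix j assume "j \<in> {..<h}"
    hence "q^j \<le> q^(h-1)" using q1 by (intro power_increasing) auto
    thus "degree (monom (1::'a) (q^j)) \<le> q^(h-1)" using degree_monom_le order_trans by blast
  qed simp
  have trpsi: "poly Tr (\<psi> x) = 0" for x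
  proof -
    have "poly Tr (\<psi> x) = (\<Sum>j<h. x ^ (q ^ Suc j) - x ^ (q^j))"
      unfolding polyTr
    proof (rule sum.cong[OF refl])
      fix j
      have "\<psi> x ^ (q^j) = (x^q)^(q^j) - x^(q^j)" unfolding \<psi>_def qpow by (rule frobd)
      also have "(x^q)^(q^j) = x ^ (q ^ Suc j)" by (simp add: power_mult)
      finally show "\<psi> x ^ (q^j) = x ^ (q ^ Suc j) - x ^ (q^j)" .
    qed
    also have "\<dots> = x ^ (q^h) - x ^ (q^0)" by (rule sum_lessThan_telescope)
    also have "x ^ (q^h) = x" using power_card_same[OF fin, of x] card by simp
    finally show ?thesis by simp
  qed
  have "card (range \<psi>) \<le> q^(h-1)"
  proof -
    have "range \<psi> \<subseteq> {y. poly Tr y = 0}" using trpsi by auto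
    hence "card (range \<psi>) \<le> card {y. poly Tr y = 0}" using fin by (intro card_mono) (auto intro: finite_subset)
    also have "\<dots> \<le> degree Tr" using card_poly_roots_bound[OF Tr0] .
    finally show ?thesis using degTr by simp
  qed
  have cT: "card T = q"
  proof (rule ccontr)
    assume "card T \<noteq> q"
    hence lt: "card T \<le> q - 1" using \<open>card T \<le> q\<close> by simp
    have "q^h = card (range \<psi>) * card T" using fc Tpsi card by simp
    also have "\<dots> \<le> q^(h-1) * (q - 1)" using lt \<open>card (range \<psi>) \<le> q^(h-1)\<close> by (intro mult_le_mono) auto
    also have "\<dots> < q^(h-1) * q" using q1 by simp
    also have "\<dots> = q^h" using h by (metis Suc_diff_le diff_Suc_1 power_Suc2)
    finally show False by simp
  qed
  have q0: "q > 0" using q1 by simp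
  show ?thesis
  proof (intro exI[of _ T] conjI ballI)
    show "card T = q" by (rule cT)
    show "0 \<in> T" using q0 by (simp add: T_def)
    show "1 \<in> T" by (simp add: T_def)
    fix x assume x: "x \<in> T"
    show "inverse x \<in> T" using x by (simp add: T_def power_inverse)
    fix y assume y: "y \<in> T"
    show "x + y \<in> T" using x y frob[of x y k] q by (simp add: T_def)
    show "x * y \<in> T" using x y by (simp add: T_def power_mult_distrib)
    show "x - y \<in> T" using x y frobd[of x y k] q by (simp add: T_def)
  qed
qed




interpretation V: vector_space "smul :: 'a::field \<Rightarrow> (nat \<Rightarrow> 'a) \<Rightarrow> (nat \<Rightarrow> 'a)"
  by unfold_locales (auto simp: smul_def fun_eq_iff algebra_simps)

definition ev :: "nat \<Rightarrow> nat \<Rightarrow> 'a::field" where "ev i = (\<lambda>j. if j = i then 1 else 0)"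

lemma smul_apply: "smul c x i = c * x i" by (simp add: smul_def)
lemma ev_apply: "ev i j = (if j = i then 1 else 0)" by (simp add: ev_def)

lemma amb_subspace: "V.subspace (ambient v :: (nat \<Rightarrow> 'a::field) set)"
  by (auto simp: V.subspace_def ambient_def smul_def)

lemma supp_span:
  assumes "finite I"
  shows "{x::nat\<Rightarrow>'a::field. \<forall>i. i \<notin> I \<longrightarrow> x i = 0} \<subseteq> V.span (ev ` I)"
  using assms
proof (induction I rule: finite_induct)
  case empty
  have "x = 0" if "\<forall>i. x i = (0::'a)" for x :: "nat \<Rightarrow> 'a" using that by (simp add: fun_eq_iff)
  thus ?case using V.span_zero by auto
next
  case (insert i I)
  show ?case
  proof
    fix x :: "nat \<Rightarrow> 'a" assume x: "x \<in> {x. \<forall>j. j \<notin> insert i I \<longrightarrow> x j = 0}"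
    let ?y = "x - smul (x i) (ev i)"
    have "?y \<in> {x. \<forall>j. j \<notin> I \<longrightarrow> x j = 0}" using x by (auto simp: smul_apply ev_apply)
    hence "?y \<in> V.span (ev ` I)" using insert.IH by blast
    hence "?y \<in> V.span (ev ` insert i I)" using V.span_mono[of "ev ` I" "ev ` insert i I"] by blast
    moreover have "smul (x i) (ev i) \<in> V.span (ev ` insert i I)"
      by (intro V.span_scale V.span_base) auto
    ultimately have "?y + smul (x i) (ev i) \<in> V.span (ev ` insert i I)" by (rule V.span_add)
    thus "x \<in> V.span (ev ` insert i I)" by simp
  qed
qed

lemma amb_span: "ambient v = V.span (ev ` {..<v} :: (nat \<Rightarrow> 'a::field) set)"
proof
  have e: "(ambient v :: (nat \<Rightarrow> 'a::field) set) = {x. \<forall>i. i \<notin> {..<v} \<longrightarrow> x i = 0}"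
    by (auto simp: ambient_def)
  show "ambient v \<subseteq> V.span (ev ` {..<v} :: (nat \<Rightarrow> 'a::field) set)"
    unfolding e by (rule supp_span) simp
  have "ev ` {..<v} \<subseteq> (ambient v :: (nat \<Rightarrow> 'a::field) set)"
    by (auto simp: ambient_def ev_apply)
  thus "V.span (ev ` {..<v}) \<subseteq> (ambient v :: (nat \<Rightarrow> 'a::field) set)"
    by (rule V.span_minimal[OF _ amb_subspace])
qed

lemma ev_indep: "V.independent (ev ` I :: (nat \<Rightarrow> 'a::field) set)"
proof
  assume "V.dependent (ev ` I :: (nat \<Rightarrow> 'a::field) set)"
  then obtain a where a: "a \<in> ev ` I" "a \<in> V.span (ev ` I - {a} :: (nat \<Rightarrow> 'a) set)"
    unfolding V.dependent_def by (rule bexE)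
  from a(1) obtain i where i: "i \<in> I" "a = ev i" by blast
  have sub: "ev ` I - {ev i} \<subseteq> {x :: nat \<Rightarrow> 'a. x i = 0}"
  proof
    fix y :: "nat \<Rightarrow> 'a" assume y: "y \<in> ev ` I - {ev i}"
    then obtain j where j: "y = ev j" by blast
    have "j \<noteq> i" using y j by (rule_tac notI) simp
    thus "y \<in> {x. x i = (0::'a)}" using j by (simp add: ev_apply)
  qed
  have ss: "V.subspace {x :: nat \<Rightarrow> 'a. x i = 0}" by (auto simp: V.subspace_def smul_apply)
  have spsub: "V.span (ev ` I - {ev i} :: (nat \<Rightarrow> 'a) set) \<subseteq> {x. x i = 0}"
    by (rule V.span_minimal[OF sub ss])
  have m: "(ev i :: nat \<Rightarrow> 'a) \<in> V.span (ev ` I - {ev i})" using a(2) i(2) by simp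
  have "(ev i :: nat \<Rightarrow> 'a) \<in> {x. x i = 0}" using m by (rule subsetD[OF spsub])
  hence "(ev i :: nat \<Rightarrow> 'a) i = 0" by simp
  thus False by (simp add: ev_apply)
qed

lemma inj_ev: "inj (ev :: nat \<Rightarrow> nat \<Rightarrow> 'a::field)"
proof
  fix i j assume "(ev i :: nat \<Rightarrow> 'a) = ev j"
  hence "(ev i :: nat \<Rightarrow> 'a) i = ev j i" by simp
  thus "i = j" by (simp add: ev_apply split: if_splits)
qed

lemma dim_amb: "V.dim (ambient v :: (nat \<Rightarrow> 'a::field) set) = v"
proof -
  have "V.dim (ambient v :: (nat \<Rightarrow> 'a::field) set) = card (ev ` {..<v} :: (nat \<Rightarrow> 'a) set)"
    unfolding amb_span by (rule V.dim_span_eq_card_independent[OF ev_indep])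
  also have "\<dots> = v" by (subst card_image) (auto intro: inj_on_subset[OF inj_ev])
  finally show ?thesis .
qed

lemma amb_basis:
  assumes "T \<subseteq> (ambient v :: (nat \<Rightarrow> 'a::field) set)"
  obtains B where "B \<subseteq> T" "V.independent B" "T \<subseteq> V.span B" "card B = V.dim T" "finite B"
proof -
  obtain B where B: "B \<subseteq> T" "V.independent B" "T \<subseteq> V.span B" "card B = V.dim T"
    using V.basis_exists by blast
  have "finite B"
    using V.independent_span_bound[of "ev ` {..<v}" B] B assms amb_span[of v, where 'a='a] by auto
  thus ?thesis using B that by blast
qed

lemma dim_mono_amb:
  assumes "S \<subseteq> T" "T \<subseteq> (ambient v :: (nat \<Rightarrow> 'a::field) set)"
  shows "V.dim S \<le> V.dim T"
proof -
  obtain B where B: "B \<subseteq> T" "V.independent B" "T \<subseteq> V.span B" "card B = V.dim T" "finite B"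
    using amb_basis[OF assms(2)] by blast
  have "V.dim S \<le> card B" using V.dim_le_card[of S B] B assms(1) by auto
  thus ?thesis using B by simp
qed

lemma dim_insert_amb:
  assumes H: "V.subspace H" "H \<subseteq> (ambient v :: (nat \<Rightarrow> 'a::field) set)" and w: "w \<notin> H"
  shows "V.dim (insert w H) = V.dim H + 1"
proof -
  obtain B where B: "B \<subseteq> H" "V.independent B" "H \<subseteq> V.span B" "card B = V.dim H" "finite B"
    using amb_basis[OF H(2)] by blast
  have spB: "V.span B \<subseteq> H" using V.span_minimal[OF B(1) H(1)] .
  have wB: "w \<notin> V.span B" using spB w by blast
  have ind: "V.independent (insert w B)" by (rule V.independent_insertI[OF wB B(2)])
  have eq: "V.span (insert w H) = V.span (insert w B)"
  proof
    show "V.span (insert w B) \<subseteq> V.span (insert w H)" using B(1) by (intro V.span_mono) auto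
    have "insert w H \<subseteq> V.span (insert w B)"
      using B(3) V.span_mono[of B "insert w B"] V.span_base[of w "insert w B"] by blast
    thus "V.span (insert w H) \<subseteq> V.span (insert w B)"
      using V.span_minimal V.subspace_span by blast
  qed
  have "V.dim (insert w H) = V.dim (V.span (insert w H))" by simp
  also have "\<dots> = card (insert w B)" unfolding eq by (rule V.dim_span_eq_card_independent[OF ind])
  also have "\<dots> = card B + 1" using B(5) wB V.span_base[of w B] card_insert_disjoint[of B w] by (metis Suc_eq_plus1)
  finally show ?thesis using B(4) by simp
qed

lemma full_of_dim:
  assumes S: "V.subspace S" "S \<subseteq> (ambient v :: (nat \<Rightarrow> 'a::field) set)" and d: "V.dim S \<ge> v"
  shows "S = ambient v"
proof (rule ccontr)
  assume "S \<noteq> ambient v"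
  then obtain x where x: "x \<in> ambient v" "x \<notin> S" using S by blast
  have "V.dim (insert x S) = V.dim S + 1" by (rule dim_insert_amb[OF S x(2)])
  moreover have "V.dim (insert x S) \<le> V.dim (ambient v :: (nat \<Rightarrow> 'a::field) set)"
    using x S by (intro dim_mono_amb[of _ _ v]) auto
  ultimately show False using d dim_amb[of v, where 'a='a] by simp
qed

lemma hyper_decomp:
  assumes H: "H \<in> kspaces v (v - 1)" and v: "v \<ge> 1"
    and w: "w \<in> ambient v" "w \<notin> H"
  shows "ambient v \<subseteq> V.span (insert w (H :: (nat \<Rightarrow> 'a::field) set))"
proof -
  have Hs: "V.subspace H" "H \<subseteq> ambient v" "V.dim H = v - 1" using H by (auto simp: kspaces_def)
  have sub: "V.span (insert w H) \<subseteq> ambient v"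
    using w Hs by (intro V.span_minimal amb_subspace) auto
  have "V.dim (V.span (insert w H)) = v"
    using dim_insert_amb[OF Hs(1,2) w(2)] Hs(3) v by simp
  hence "V.span (insert w H) = ambient v"
    by (intro full_of_dim[OF V.subspace_span sub]) simp
  thus ?thesis by simp
qed

lemma hyper_intro:
  assumes H: "V.subspace H" "H \<subseteq> (ambient v :: (nat \<Rightarrow> 'a::field) set)"
    and w: "w \<in> ambient v" "w \<notin> H" and sp: "ambient v \<subseteq> V.span (insert w H)"
  shows "H \<in> kspaces v (v - 1)"
proof -
  have "V.span (insert w H) \<subseteq> ambient v"
    using w H by (intro V.span_minimal amb_subspace) auto
  hence "V.span (insert w H) = ambient v" using sp by blast
  hence "V.dim (insert w H) = v" using dim_amb[of v, where 'a='a] V.dim_span by metis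
  hence "V.dim H = v - 1" using dim_insert_amb[OF H w(2)] by simp
  thus ?thesis using H by (simp add: kspaces_def)
qed

lemma point_intro:
  assumes "x \<in> (ambient v :: (nat \<Rightarrow> 'a::field) set)" "x \<noteq> 0"
  shows "V.span {x} \<in> points v"
proof -
  have ind: "V.independent {x}"
    using V.independent_insertI[of x "{}"] assms(2) by (simp add: V.span_empty)
  have "V.dim (V.span {x}) = 1" using V.dim_span_eq_card_independent[OF ind] by simp
  moreover have "V.span {x} \<subseteq> ambient v" using assms by (intro V.span_minimal amb_subspace) auto
  ultimately show ?thesis by (simp add: kspaces_def)
qed




lemma finite_amb:
  assumes "finite (UNIV :: 'a set)"
  shows "finite (ambient v :: (nat \<Rightarrow> 'a::field) set)"
proof (rule inj_on_finite[of "\<lambda>x. restrict x {..<v}" _ "PiE {..<v} (\<lambda>_. UNIV)"])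
  show "inj_on (\<lambda>x. restrict x {..<v}) (ambient v :: (nat \<Rightarrow> 'a::field) set)"
  proof
    fix x y :: "nat \<Rightarrow> 'a" assume xy: "x \<in> ambient v" "y \<in> ambient v"
      "restrict x {..<v} = restrict y {..<v}"
    show "x = y"
    proof
      fix i show "x i = y i"
      proof (cases "i < v")
        case True thus ?thesis using fun_cong[OF xy(3), of i] by simp
      next
        case False thus ?thesis using xy(1,2) by (simp add: ambient_def)
      qed
    qed
  qed
  show "(\<lambda>x. restrict x {..<v}) ` ambient v \<subseteq> PiE {..<v} (\<lambda>_. UNIV)"
    by (auto simp: PiE_def extensional_def)
  show "finite (PiE {..<v} (\<lambda>_. UNIV :: 'a set))" using assms by (intro finite_PiE) auto
qed

lemma finite_points:
  assumes "finite (UNIV :: 'a set)"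
  shows "finite (points v :: (nat \<Rightarrow> 'a::field) set set)"
proof (rule finite_subset[of _ "Pow (ambient v)"])
  show "points v \<subseteq> Pow (ambient v :: (nat \<Rightarrow> 'a::field) set)" by (auto simp: kspaces_def)
  show "finite (Pow (ambient v :: (nat \<Rightarrow> 'a::field) set))" using finite_amb[OF assms] by simp
qed

lemma coord_hyper:
  assumes ij: "i \<noteq> j" "i < v"
  shows "{x \<in> ambient v. x i = (lam::'a::field) * x j} \<in> kspaces v (v - 1)"
proof -
  let ?H = "{x \<in> ambient v. x i = (lam::'a::field) * x j}"
  have sub: "V.subspace ?H"
    by (auto simp: V.subspace_def ambient_def smul_apply algebra_simps)
  have w: "ev i \<in> (ambient v :: (nat \<Rightarrow> 'a) set)" "ev i \<notin> ?H"
    using ij by (auto simp: ambient_def ev_apply)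
  show ?thesis
  proof (rule hyper_intro[OF sub _ w])
    show "?H \<subseteq> ambient v" by auto
    show "ambient v \<subseteq> V.span (insert (ev i) ?H)"
    proof
      fix x :: "nat \<Rightarrow> 'a" assume x: "x \<in> ambient v"
      let ?c = "x i - lam * x j"
      let ?y = "x - smul ?c (ev i)"
      have "?y \<in> ?H" using x ij by (auto simp: ambient_def smul_apply ev_apply)
      hence "?y \<in> V.span (insert (ev i) ?H)" by (intro V.span_base) auto
      moreover have "smul ?c (ev i) \<in> V.span (insert (ev i) ?H)"
        by (intro V.span_scale V.span_base) auto
      ultimately have "?y + smul ?c (ev i) \<in> V.span (insert (ev i) ?H)" by (rule V.span_add)
      thus "x \<in> V.span (insert (ev i) ?H)" by simp
    qed
  qed
qed

lemma cylinder_F: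
  assumes cyl: "is_cylinder v r (mset_set S)" and finS: "finite S"
    and fin: "finite (UNIV :: 'a set)" and v: "v \<ge> 1"
  shows "\<exists>F. F \<in> kspaces v r \<and> (\<forall>H \<in> kspaces v (v - 1).
            (\<forall>P\<in>S. \<not> P \<subseteq> H) \<longrightarrow> F \<subseteq> (H :: (nat \<Rightarrow> 'a::field) set))"
proof -
  obtain F L where F: "F \<in> kspaces v r"
    and L: "\<And>i. i < CARD('a) \<Longrightarrow> L i \<in> kspaces v (r + 1) \<and> F \<subseteq> L i"
    and M: "mset_set S = (\<Sum>i < CARD('a). mset_set {P \<in> points v. P \<subseteq> L i \<and> \<not> P \<subseteq> F})"
    using cyl unfolding is_cylinder_def by blast
  have c0: "0 < CARD('a)" using fin by (simp add: finite_UNIV_card_ge_0)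
  have L0: "L 0 \<in> kspaces v (r + 1)" "F \<subseteq> L 0" using L[OF c0] by auto
  have Fs: "V.subspace F" "F \<subseteq> ambient v" "V.dim F = r" using F by (auto simp: kspaces_def)
  have L0s: "V.subspace (L 0)" "L 0 \<subseteq> ambient v" "V.dim (L 0) = r + 1" using L0 by (auto simp: kspaces_def)
  show ?thesis
  proof (intro exI[of _ F] conjI F ballI impI)
    fix H :: "(nat \<Rightarrow> 'a) set" assume H: "H \<in> kspaces v (v - 1)" and disj: "\<forall>P\<in>S. \<not> P \<subseteq> H"
    have Hs: "V.subspace H" "H \<subseteq> ambient v" using H by (auto simp: kspaces_def)
    show "F \<subseteq> H"
    proof (rule ccontr)
      assume "\<not> F \<subseteq> H"
      then obtain w where w: "w \<in> F" "w \<notin> H" by blast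
      have "\<not> L 0 \<subseteq> F"
      proof
        assume "L 0 \<subseteq> F"
        hence "V.dim (L 0) \<le> V.dim F" using Fs(2) by (rule dim_mono_amb)
        thus False using Fs(3) L0s(3) by simp
      qed
      then obtain y where y: "y \<in> L 0" "y \<notin> F" by blast
      have "y \<in> V.span (insert w H)" using hyper_decomp[OF H v, of w] w Fs(2) y L0s(2) by blast
      then obtain k where k: "y - smul k w \<in> V.span H" unfolding V.span_insert by blast
      define hh where "hh = y - smul k w"
      have spH: "V.span H = H" using Hs(1) V.span_eq_iff by blast
      have hhH: "hh \<in> H" using k unfolding spH hh_def .
      have wL: "w \<in> L 0" using w L0 by blast
      have hhL: "hh \<in> L 0" unfolding hh_def using L0s(1) y(1) wL
        by (intro V.subspace_diff V.subspace_scale) auto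
      have hhF: "hh \<notin> F"
      proof
        assume "hh \<in> F"
        hence "hh + smul k w \<in> F" using Fs(1) w(1) by (intro V.subspace_add V.subspace_scale) auto
        thus False using y(2) by (simp add: hh_def)
      qed
      have hh0: "hh \<noteq> 0" using hhF V.subspace_0[OF Fs(1)] by auto
      define P where "P = V.span {hh}"
      have Pp: "P \<in> points v" unfolding P_def using hhL L0s(2) hh0 by (intro point_intro) auto
      have PL: "P \<subseteq> L 0" unfolding P_def using hhL L0s(1) by (intro V.span_minimal) auto
      have PH: "P \<subseteq> H" unfolding P_def using hhH Hs(1) by (intro V.span_minimal) auto
      have PF: "\<not> P \<subseteq> F" unfolding P_def using hhF V.span_base[of hh "{hh}"] by blast
      have "P \<in># mset_set {P \<in> points v. P \<subseteq> L 0 \<and> \<not> P \<subseteq> F}"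
        using Pp PL PF finite_points[OF fin, of v] by simp
      hence "count (mset_set {P \<in> points v. P \<subseteq> L 0 \<and> \<not> P \<subseteq> F}) P > 0" by simp
      moreover have "count (mset_set {P \<in> points v. P \<subseteq> L 0 \<and> \<not> P \<subseteq> F}) P \<le>
          (\<Sum>i < CARD('a). count (mset_set {P \<in> points v. P \<subseteq> L i \<and> \<not> P \<subseteq> F}) P)"
        using c0 by (intro member_le_sum) auto
      ultimately have "count (mset_set S) P > 0" unfolding M count_sum by linarith
      hence "P \<in> S" using finS by simp
      thus False using disj PH by blast
    qed
  qed
qed




locale constr =
  fixes T :: "'a::field set" and p k q h r v e :: nat and ct :: "nat \<Rightarrow> 'a"
  assumes fin: "finite (UNIV :: 'a set)" and cardA: "CARD('a) = q^h"
    and p: "prime p" and k: "k \<ge> 1" and q: "q = p^k" and h: "h \<ge> 2" and r: "r \<ge> 1"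
    and v: "v = r + 2*h + e"
    and cT: "card T = q" and T0: "0 \<in> T" and T1: "1 \<in> T"
    and Tadd: "\<And>x y. x\<in>T \<Longrightarrow> y\<in>T \<Longrightarrow> x + y \<in> T"
    and Tmul: "\<And>x y. x\<in>T \<Longrightarrow> y\<in>T \<Longrightarrow> x * y \<in> T"
    and Tdiff: "\<And>x y. x\<in>T \<Longrightarrow> y\<in>T \<Longrightarrow> x - y \<in> T"
    and Tinv: "\<And>x. x\<in>T \<Longrightarrow> inverse x \<in> T"
    and ctT: "ct ` {..<e} \<subseteq> T - {0,1}" and ctinj: "inj_on ct {..<e}"
begin

definition aa :: "'a \<Rightarrow> nat \<Rightarrow> 'a" where
  "aa c = (\<lambda>i. if i = 0 then 1 else if i = r then c
     else if r + 2*h \<le> i \<and> i < v \<and> ct (i - (r + 2*h)) = c then 1 else 0)"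

definition U0 :: "(nat \<Rightarrow> 'a) set" where
  "U0 = {u. u 0 = 0 \<and> u r = 0 \<and> (\<forall>i. r < i \<and> i < r + 2*h \<longrightarrow> u i \<in> T) \<and> (\<forall>i\<ge>r + 2*h. u i = 0)}"

definition A :: "(nat \<Rightarrow> 'a) set" where
  "A = (\<lambda>(c,u). aa c + u) ` (T \<times> U0)"

definition S :: "(nat \<Rightarrow> 'a) set set" where
  "S = (\<lambda>x. V.span {x}) ` A"

lemma r0: "r \<noteq> 0" using r by simp

lemma aa_0[simp]: "aa c 0 = 1" by (simp add: aa_def)
lemma aa_r[simp]: "aa c r = c" using r0 by (simp add: aa_def)
lemma U0_0: "u \<in> U0 \<Longrightarrow> u 0 = 0" by (simp add: U0_def)
lemma U0_r: "u \<in> U0 \<Longrightarrow> u r = 0" by (simp add: U0_def)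

lemma rv: "r < v" using v h by simp

lemma aa_amb: "aa c \<in> ambient v" using rv by (auto simp: aa_def ambient_def)
lemma U0_amb: "U0 \<subseteq> ambient v" using v by (auto simp: U0_def ambient_def)

lemma U0_zero: "0 \<in> U0" using T0 by (simp add: U0_def)
lemma U0_diff: "u \<in> U0 \<Longrightarrow> u' \<in> U0 \<Longrightarrow> u - u' \<in> U0"
  using Tdiff by (simp add: U0_def)
lemma U0_add: "u \<in> U0 \<Longrightarrow> u' \<in> U0 \<Longrightarrow> u + u' \<in> U0"
  using Tadd by (simp add: U0_def)
lemma U0_smul: "t \<in> T \<Longrightarrow> u \<in> U0 \<Longrightarrow> smul t u \<in> U0"
  using Tmul by (simp add: U0_def smul_apply)

lemma A_amb: "A \<subseteq> ambient v"
proof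
  fix x assume "x \<in> A"
  then obtain c u where "c \<in> T" "u \<in> U0" "x = aa c + u" by (auto simp: A_def)
  thus "x \<in> ambient v" using aa_amb U0_amb amb_subspace V.subspace_add by blast
qed

lemma A_0: "x \<in> A \<Longrightarrow> x 0 = 1"
  by (auto simp: A_def U0_0)

lemma A_T: assumes "x \<in> A" "r \<le> i" "i < v" shows "x i \<in> T"
proof -
  obtain c u where cu: "c \<in> T" "u \<in> U0" "x = aa c + u" using assms(1) by (auto simp: A_def)
  show ?thesis
  proof (cases "i < r + 2*h")
    case True
    show ?thesis
    proof (cases "i = r")
      case True thus ?thesis using cu by (simp add: U0_r)
    next
      case False
      hence "aa c i = 0" "u i \<in> T" using True assms(2) r0 cu(2) by (auto simp: aa_def U0_def)
      thus ?thesis using cu by simp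
    qed
  next
    case False
    hence "u i = 0" using cu(2) by (simp add: U0_def)
    moreover have "aa c i \<in> T" using T0 T1 cu(1) by (simp add: aa_def)
    ultimately show ?thesis using cu by simp
  qed
qed

lemma inj_A: "inj_on (\<lambda>(c,u). aa c + u) (T \<times> U0)"
proof (rule inj_onI, clarify)
  fix c u c' u' assume *: "c \<in> T" "u \<in> U0" "c' \<in> T" "u' \<in> U0" "aa c + u = aa c' + u'"
  have "(aa c + u) r = (aa c' + u') r" using *(5) by simp
  hence cc: "c = c'" using *(2,4) by (simp add: U0_r)
  thus "c = c' \<and> u = u'" using *(5) by simp
qed

lemma A_ne0: "x \<in> A \<Longrightarrow> x \<noteq> 0" using A_0 by force

lemma inj_S: "inj_on (\<lambda>x. V.span {x}) A"
proof
  fix x y assume xy: "x \<in> A" "y \<in> A" "V.span {x} = V.span {y}"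
  have "y \<in> V.span {x}" using xy(3) V.span_base[of y "{y}"] by simp
  then obtain c where c: "y = smul c x" unfolding V.span_singleton by blast
  have "y 0 = c * x 0" using c by (simp add: smul_apply)
  moreover have "x 0 = 1" "y 0 = 1" using A_0 xy by auto
  ultimately have "c = 1" by simp
  thus "x = y" using c by (simp add: smul_def)
qed

lemma card_S: "card S = card A" unfolding S_def by (rule card_image[OF inj_S])

lemma S_points: "S \<subseteq> points v"
  unfolding S_def using A_amb A_ne0 point_intro by blast

lemma in_H_iff: assumes "V.subspace H" shows "V.span {x} \<subseteq> H \<longleftrightarrow> x \<in> H"
  using assms V.span_base[of x "{x}"] V.span_minimal[of "{x}" H] by blast

end




context constr
begin

lemma q1: "q > 1"
proof -
  have "p > 1" using p prime_gt_1_nat by blast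
  thus ?thesis using q k one_less_power[of p k] by simp
qed

lemma card_U0: "card U0 = CARD('a)^(r-1) * q^(2*h-1)"
proof -
  define I where "I = {1..<r} \<union> {r<..<r+2*h}"
  define D where "D = (\<lambda>i::nat. if i < r then (UNIV::'a set) else T)"
  have out: "u i = 0" if "u \<in> U0" "i \<notin> I" for u i
  proof -
    have "i = 0 \<or> i = r \<or> i \<ge> r + 2*h" using that(2) by (auto simp: I_def)
    thus ?thesis using that(1) by (auto simp: U0_def)
  qed
  have inj: "inj_on (\<lambda>u. restrict u I) U0"
  proof
    fix u u' assume uu: "u \<in> U0" "u' \<in> U0" "restrict u I = restrict u' I"
    show "u = u'"
    proof
      fix i show "u i = u' i"
      proof (cases "i \<in> I")
        case True thus ?thesis using fun_cong[OF uu(3), of i] by simp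
      next
        case False thus ?thesis using out[OF uu(1) False] out[OF uu(2) False] by simp
      qed
    qed
  qed
  have img: "(\<lambda>u. restrict u I) ` U0 = PiE I D"
  proof
    show "(\<lambda>u. restrict u I) ` U0 \<subseteq> PiE I D"
    proof
      fix f assume "f \<in> (\<lambda>u. restrict u I) ` U0"
      then obtain u where u: "u \<in> U0" "f = restrict u I" by blast
      have "u i \<in> D i" if "i \<in> I" for i
        using that u(1) by (auto simp: I_def D_def U0_def)
      thus "f \<in> PiE I D" using u(2) by (simp add: restrict_PiE_iff)
    qed
    show "PiE I D \<subseteq> (\<lambda>u. restrict u I) ` U0"
    proof
      fix f assume f: "f \<in> PiE I D"
      define u where "u = (\<lambda>i. if i \<in> I then f i else 0)"
      have "u \<in> U0"
      proof -
        have "u i \<in> T" if "r < i" "i < r + 2*h" for i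
          using that f PiE_mem[OF f, of i] by (auto simp: u_def I_def D_def)
        moreover have "u 0 = 0" "u r = 0" by (auto simp: u_def I_def)
        moreover have "u i = 0" if "i \<ge> r + 2*h" for i using that by (auto simp: u_def I_def)
        ultimately show ?thesis by (simp add: U0_def)
      qed
      moreover have "restrict u I = f"
      proof -
        have "restrict u I = restrict f I" by (auto simp: u_def restrict_def)
        thus ?thesis using f by simp
      qed
      ultimately show "f \<in> (\<lambda>u. restrict u I) ` U0" by blast
    qed
  qed
  have "card U0 = card (PiE I D)" using card_image[OF inj] img by simp
  also have "\<dots> = (\<Prod>i\<in>I. card (D i))" by (rule card_PiE) (simp add: I_def)
  also have "\<dots> = (\<Prod>i\<in>{1..<r}. card (D i)) * (\<Prod>i\<in>{r<..<r+2*h}. card (D i))"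
    unfolding I_def by (rule prod.union_disjoint) auto
  also have "(\<Prod>i\<in>{1..<r}. card (D i)) = (\<Prod>i\<in>{1..<r}. CARD('a))"
    by (rule prod.cong) (auto simp: D_def)
  also have "(\<Prod>i\<in>{r<..<r+2*h}. card (D i)) = (\<Prod>i\<in>{r<..<r+2*h}. q)"
    by (rule prod.cong) (auto simp: D_def cT)
  finally show ?thesis by simp
qed

lemma card_A: "card A = CARD('a)^(r+1)"
proof -
  have "card A = card (T \<times> U0)" unfolding A_def by (rule card_image[OF inj_A])
  also have "\<dots> = q * (CARD('a)^(r-1) * q^(2*h-1))" by (simp add: card_cartesian_product cT card_U0)
  also have "\<dots> = CARD('a)^(r-1) * q^(2*h)"
  proof -
    have "q * q^(2*h-1) = q^(2*h)" using h by (metis Suc_diff_le power_Suc le_trans one_le_numeral mult_le_mono2 diff_Suc_1 mult_2 le_add1 numeral_le_one_iff)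
    thus ?thesis by (metis mult.left_commute)
  qed
  also have "\<dots> = CARD('a)^(r+1)"
  proof -
    have "q^(2*h) = CARD('a)^2" using cardA by (simp add: power_mult[symmetric] mult.commute)
    thus ?thesis using r by (metis power_add le_add_diff_inverse2 add.commute one_add_one add_diff_cancel_right' add_Suc_right Suc_eq_plus1)
  qed
  finally show ?thesis .
qed

end



context constr
begin

lemma finite_A: "finite A" using finite_subset[OF A_amb finite_amb[OF fin]] .
lemma finite_S: "finite S" unfolding S_def using finite_A by simp

lemma ct_props: "t < e \<Longrightarrow> ct t \<in> T \<and> ct t \<noteq> 0 \<and> ct t \<noteq> 1" using ctT by auto

lemma vlt: "r + 2*h \<le> i \<Longrightarrow> i < v \<Longrightarrow> i - (r + 2*h) < e" using v by simp

lemma aa_zero: "aa 0 = ev 0"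
proof
  fix i show "aa 0 i = ev 0 i"
    using r0 ct_props[of "i - (r + 2*h)"] vlt[of i] by (auto simp: aa_def ev_apply)
qed

lemma aa_one: "aa 1 = ev 0 + ev r"
proof
  fix i show "aa 1 i = (ev 0 + ev r) i"
    using r0 ct_props[of "i - (r + 2*h)"] vlt[of i] by (auto simp: aa_def ev_apply)
qed

lemma aa_ct: assumes i: "r + 2*h \<le> i" "i < v"
  shows "aa (ct (i - (r + 2*h))) = ev 0 + smul (ct (i - (r + 2*h))) (ev r) + ev i"
proof
  fix j
  let ?c = "ct (i - (r + 2*h))"
  have ieq: "ct (j - (r + 2*h)) = ?c \<longleftrightarrow> j = i" if "r + 2*h \<le> j" "j < v"
  proof
    assume "ct (j - (r + 2*h)) = ?c"
    hence "j - (r + 2*h) = i - (r + 2*h)" using ctinj vlt[OF that] vlt[OF i] by (auto simp: inj_on_def)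
    thus "j = i" using that i by simp
  qed simp
  show "aa ?c j = (ev 0 + smul ?c (ev r) + ev i) j"
    using i r0 ieq h by (auto simp: aa_def ev_apply smul_apply)
qed

lemma aa_in_A: "c \<in> T \<Longrightarrow> u \<in> U0 \<Longrightarrow> aa c + u \<in> A"
  unfolding A_def by (rule image_eqI[of _ _ "(c,u)"]) auto

lemma ev_span_A: assumes "i < v" shows "ev i \<in> V.span A"
proof -
  have a0: "ev 0 \<in> V.span A" using aa_in_A[OF T0 U0_zero] aa_zero V.span_base by fastforce
  have a1: "ev 0 + ev r \<in> V.span A" using aa_in_A[OF T1 U0_zero] aa_one V.span_base by fastforce
  consider "i = 0" | "i = r" | "1 \<le> i \<and> i < r" | "r < i \<and> i < r + 2*h" | "r + 2*h \<le> i"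
    by linarith
  thus ?thesis
  proof cases
    case 1 thus ?thesis using a0 by simp
  next
    case 2
    have "(ev 0 + ev r) - ev 0 \<in> V.span A" using V.span_diff[OF a1 a0] .
    thus ?thesis using 2 by simp
  next
    case 3
    have "ev i \<in> U0" using 3 T0 T1 r0 by (auto simp: U0_def ev_apply)
    hence "ev 0 + ev i \<in> V.span A" using aa_in_A[OF T0] aa_zero V.span_base by fastforce
    from V.span_diff[OF this a0] show ?thesis by simp
  next
    case 4
    have "ev i \<in> U0" using 4 T0 T1 r0 by (auto simp: U0_def ev_apply)
    hence "ev 0 + ev i \<in> V.span A" using aa_in_A[OF T0] aa_zero V.span_base by fastforce
    from V.span_diff[OF this a0] show ?thesis by simp
  next
    case 5
    let ?c = "ct (i - (r + 2*h))"
    have cT: "?c \<in> T" using ct_props[of "i - (r + 2*h)"] vlt[OF 5 assms] by simp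
    have "aa ?c \<in> V.span A" using aa_in_A[OF cT U0_zero] V.span_base by fastforce
    hence "ev 0 + smul ?c (ev r) + ev i \<in> V.span A" using aa_ct[OF 5 assms] by simp
    moreover have "smul ?c (ev r) \<in> V.span A" using V.span_scale[OF V.span_diff[OF a1 a0]] by simp
    ultimately have "(ev 0 + smul ?c (ev r) + ev i) - ev 0 - smul ?c (ev r) \<in> V.span A"
      using a0 by (intro V.span_diff) auto
    thus ?thesis by simp
  qed
qed

lemma spanning_S: "spanning v S"
  unfolding spanning_def
proof
  have "\<Union>S \<subseteq> ambient v"
  proof
    fix y assume "y \<in> \<Union>S"
    then obtain x where x: "x \<in> A" "y \<in> V.span {x}" unfolding S_def by blast
    have "V.span {x} \<subseteq> ambient v" using x(1) A_amb by (intro V.span_minimal[OF _ amb_subspace]) auto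
    thus "y \<in> ambient v" using x(2) by blast
  qed
  thus "V.span (\<Union>S) \<subseteq> ambient v" by (rule V.span_minimal[OF _ amb_subspace])
  have AS: "A \<subseteq> \<Union>S" unfolding S_def using V.span_base by blast
  have "ev ` {..<v} \<subseteq> V.span (\<Union>S)" using ev_span_A V.span_mono[OF AS] by blast
  hence "V.span (ev ` {..<v}) \<subseteq> V.span (\<Union>S)" by (rule V.span_minimal) simp
  thus "ambient v \<subseteq> V.span (\<Union>S)" using amb_span by blast
qed

lemma not_cyl: "\<not> is_cylinder v r (mset_set S)"
proof
  assume cyl: "is_cylinder v r (mset_set S)"
  have v1: "v \<ge> 1" using rv by simp
  obtain F where F: "F \<in> kspaces v r"
    and FH: "\<And>H. H \<in> kspaces v (v - 1) \<Longrightarrow> (\<forall>P\<in>S. \<not> P \<subseteq> H) \<Longrightarrow> F \<subseteq> H"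
    using cylinder_F[OF cyl finite_S fin v1] by blast
  have "T \<noteq> UNIV"
  proof
    assume "T = UNIV"
    hence "q = q^h" using cT cardA by simp
    moreover have "q < q^h" using q1 h by (metis power_one_right power_strict_increasing_iff one_less_numeral_iff semiring_norm(76) order_less_le_trans)
    ultimately show False by simp
  qed
  then obtain lam where lam: "lam \<notin> T" by blast
  let ?H0 = "{x \<in> ambient v. x 0 = (0::'a) * x 1}"
  have H0: "?H0 \<in> kspaces v (v - 1)" using v1 by (intro coord_hyper) auto
  have "\<forall>P\<in>S. \<not> P \<subseteq> ?H0"
  proof (intro ballI notI)
    fix P assume "P \<in> S" "P \<subseteq> ?H0"
    then obtain x where x: "x \<in> A" "V.span {x} \<subseteq> ?H0" unfolding S_def by blast
    have "V.subspace ?H0" using H0 by (simp add: kspaces_def)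
    hence "x \<in> ?H0" using x(2) in_H_iff by blast
    thus False using A_0[OF x(1)] by simp
  qed
  hence F0: "F \<subseteq> ?H0" using FH[OF H0] by blast
  have Fi: "F \<subseteq> {x \<in> ambient v. x i = lam * x 0}" if i: "r \<le> i" "i < v" for i
  proof -
    let ?H = "{x \<in> ambient v. x i = lam * x 0}"
    have Hk: "?H \<in> kspaces v (v - 1)" using i r0 by (intro coord_hyper) auto
    have "\<forall>P\<in>S. \<not> P \<subseteq> ?H"
    proof (intro ballI notI)
      fix P assume "P \<in> S" "P \<subseteq> ?H"
      then obtain x where x: "x \<in> A" "V.span {x} \<subseteq> ?H" unfolding S_def by blast
      have "V.subspace ?H" using Hk by (simp add: kspaces_def)
      hence "x \<in> ?H" using x(2) in_H_iff by blast
      hence "x i = lam" using A_0[OF x(1)] by simp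
      thus False using A_T[OF x(1) i] lam by simp
    qed
    thus ?thesis using FH[OF Hk] by blast
  qed
  have Fs: "F \<subseteq> ambient v" "V.dim F = r" using F by (auto simp: kspaces_def)
  have "F \<subseteq> {x. \<forall>j. j \<notin> {1..<r} \<longrightarrow> x j = (0::'a)}"
  proof (intro subsetI CollectI allI impI)
    fix x j assume x: "x \<in> F" and j: "j \<notin> {1..<r}"
    consider "j = 0" | "r \<le> j \<and> j < v" | "v \<le> j" using j by force
    thus "x j = 0"
    proof cases
      case 1 thus ?thesis using F0 x by auto
    next
      case 2
      have "x j = lam * x 0" using Fi[of j] 2 x by auto
      moreover have "x 0 = 0" using F0 x by auto
      ultimately show ?thesis by simp
    next
      case 3 thus ?thesis using Fs(1) x by (auto simp: ambient_def)
    qed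
  qed
  hence "F \<subseteq> V.span (ev ` {1..<r})" using supp_span[of "{1..<r}"] by auto
  hence "V.dim F \<le> card (ev ` {1..<r} :: (nat \<Rightarrow> 'a) set)" by (intro V.dim_le_card) auto
  also have "\<dots> \<le> card {1..<r}" by (rule card_image_le) simp
  finally show False using Fs(2) r by simp
qed

end



context constr
begin

lemma card_A_U0: "card A = q * card U0"
proof -
  have "card A = card (T \<times> U0)" unfolding A_def by (rule card_image[OF inj_A])
  thus ?thesis by (simp add: card_cartesian_product cT)
qed

lemma finite_U0: "finite U0" using finite_subset[OF U0_amb finite_amb[OF fin]] .
lemma finite_T: "finite T" by (rule finite_subset[OF subset_UNIV fin])

lemma count_H:
  assumes H: "H \<in> kspaces v (v - 1)"
  shows "CARD('a)^r dvd card {P \<in> S. P \<subseteq> H}"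
proof -
  have Hs: "V.subspace H" "H \<subseteq> ambient v" "V.dim H = v - 1" using H by (auto simp: kspaces_def)
  have v1: "v \<ge> 1" using rv by simp
  have e1: "{P \<in> S. P \<subseteq> H} = (\<lambda>x. V.span {x}) ` {x\<in>A. x \<in> H}"
    unfolding S_def using in_H_iff[OF Hs(1)] by auto
  have c1: "card {P \<in> S. P \<subseteq> H} = card {x\<in>A. x \<in> H}"
    unfolding e1 by (rule card_image) (rule inj_on_subset[OF inj_S], auto)
  define B where "B = (\<lambda>c. {u\<in>U0. aa c + u \<in> H})"
  have e2: "{x\<in>A. x \<in> H} = (\<Union>c\<in>T. (\<lambda>u. aa c + u) ` B c)"
    unfolding A_def B_def by auto
  have c2: "card {x\<in>A. x \<in> H} = (\<Sum>c\<in>T. card ((\<lambda>u. aa c + u) ` B c))"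
    unfolding e2
  proof (rule card_UN_disjoint[OF finite_T])
    show "\<forall>c\<in>T. finite ((\<lambda>u. aa c + u) ` B c)" using finite_U0 by (auto simp: B_def)
    show "\<forall>c\<in>T. \<forall>c'\<in>T. c \<noteq> c' \<longrightarrow> (\<lambda>u. aa c + u) ` B c \<inter> (\<lambda>u. aa c' + u) ` B c' = {}"
    proof (intro ballI impI)
      fix c c' assume "c \<in> T" "c' \<in> T" "c \<noteq> c'"
      show "(\<lambda>u. aa c + u) ` B c \<inter> (\<lambda>u. aa c' + u) ` B c' = {}"
      proof (rule ccontr)
        assume "(\<lambda>u. aa c + u) ` B c \<inter> (\<lambda>u. aa c' + u) ` B c' \<noteq> {}"
        then obtain u u' where "u \<in> U0" "u' \<in> U0" "aa c + u = aa c' + u'" by (auto simp: B_def)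
        hence "(aa c + u) r = (aa c' + u') r" by simp
        thus False using \<open>u \<in> U0\<close> \<open>u' \<in> U0\<close> \<open>c \<noteq> c'\<close> by (simp add: U0_r)
      qed
    qed
  qed
  have c3: "card ((\<lambda>u. aa c + u) ` B c) = card (B c)" for c
    by (rule card_image) (auto intro: inj_onI)
  obtain w where w: "w \<in> ambient v" "w \<notin> H"
  proof -
    have "\<not> ambient v \<subseteq> H"
    proof
      assume "ambient v \<subseteq> H"
      hence "V.dim (ambient v :: (nat \<Rightarrow> 'a) set) \<le> V.dim H" using Hs(2) by (rule dim_mono_amb)
      thus False using dim_amb[of v, where 'a='a] Hs(3) v1 by simp
    qed
    thus ?thesis using that by blast
  qed
  have spH: "V.span H = H" using Hs(1) V.span_eq_iff by blast
  have dec: "\<exists>a. x - smul a w \<in> H" if "x \<in> ambient v" for x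
  proof -
    have "x \<in> V.span (insert w H)" using hyper_decomp[OF H v1 w] that by blast
    thus ?thesis unfolding V.span_insert spH by blast
  qed
  have uniq: "a = b" if "x - smul a w \<in> H" "x - smul b w \<in> H" for x a b
  proof (rule ccontr)
    assume ab: "a \<noteq> b"
    have "(x - smul b w) - (x - smul a w) \<in> H" using V.subspace_diff[OF Hs(1) that(2) that(1)] .
    moreover have "(x - smul b w) - (x - smul a w) = smul (a - b) w"
      by (simp add: fun_eq_iff smul_apply algebra_simps)
    ultimately have "smul (a - b) w \<in> H" by simp
    hence "smul (inverse (a - b)) (smul (a - b) w) \<in> H" by (rule V.subspace_scale[OF Hs(1)])
    moreover have "smul (inverse (a - b)) (smul (a - b) w) = w" using ab
      by (simp add: fun_eq_iff smul_apply)
    ultimately show False using w by simp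
  qed
  define \<phi> where "\<phi> = (\<lambda>x. SOME a. x - smul a w \<in> H)"
  have \<phi>H: "x - smul (\<phi> x) w \<in> H" if "x \<in> ambient v" for x
    unfolding \<phi>_def using someI_ex[OF dec[OF that]] .
  have ambs: "V.subspace (ambient v :: (nat \<Rightarrow> 'a) set)" by (rule amb_subspace)
  have \<phi>diff: "\<phi> (x - y) = \<phi> x - \<phi> y" if "x \<in> ambient v" "y \<in> ambient v" for x y
  proof -
    have "(x - smul (\<phi> x) w) - (y - smul (\<phi> y) w) \<in> H" using V.subspace_diff[OF Hs(1) \<phi>H[OF that(1)] \<phi>H[OF that(2)]] .
    moreover have "(x - smul (\<phi> x) w) - (y - smul (\<phi> y) w) = (x - y) - smul (\<phi> x - \<phi> y) w"
      by (simp add: fun_eq_iff smul_apply algebra_simps)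
    ultimately have "(x - y) - smul (\<phi> x - \<phi> y) w \<in> H" by simp
    moreover have "(x - y) - smul (\<phi> (x - y)) w \<in> H" using \<phi>H V.subspace_diff[OF ambs that] by blast
    ultimately show ?thesis using uniq by blast
  qed
  have \<phi>add: "\<phi> (x + y) = \<phi> x + \<phi> y" if "x \<in> ambient v" "y \<in> ambient v" for x y
  proof -
    have "(x - smul (\<phi> x) w) + (y - smul (\<phi> y) w) \<in> H" using V.subspace_add[OF Hs(1) \<phi>H[OF that(1)] \<phi>H[OF that(2)]] .
    moreover have "(x - smul (\<phi> x) w) + (y - smul (\<phi> y) w) = (x + y) - smul (\<phi> x + \<phi> y) w"
      by (simp add: fun_eq_iff smul_apply algebra_simps)
    ultimately have "(x + y) - smul (\<phi> x + \<phi> y) w \<in> H" by simp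
    moreover have "(x + y) - smul (\<phi> (x + y)) w \<in> H" using \<phi>H V.subspace_add[OF ambs that] by blast
    ultimately show ?thesis using uniq by blast
  qed
  have \<phi>smul: "\<phi> (smul t x) = t * \<phi> x" if "x \<in> ambient v" for x t
  proof -
    have "smul t (x - smul (\<phi> x) w) \<in> H" using V.subspace_scale[OF Hs(1) \<phi>H[OF that]] .
    moreover have "smul t (x - smul (\<phi> x) w) = smul t x - smul (t * \<phi> x) w"
      by (simp add: fun_eq_iff smul_apply algebra_simps)
    ultimately have "smul t x - smul (t * \<phi> x) w \<in> H" by simp
    moreover have "smul t x - smul (\<phi> (smul t x)) w \<in> H" using \<phi>H V.subspace_scale[OF ambs that] by blast
    ultimately show ?thesis using uniq by blast
  qed
  have sm0: "smul 0 w = 0" by (simp add: fun_eq_iff smul_apply)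
  have \<phi>0: "\<phi> x = 0 \<longleftrightarrow> x \<in> H" if "x \<in> ambient v" for x
  proof
    assume "\<phi> x = 0" thus "x \<in> H" using \<phi>H[OF that] by (simp add: sm0)
  next
    assume "x \<in> H"
    hence "x - smul 0 w \<in> H" by (simp add: sm0)
    thus "\<phi> x = 0" using uniq \<phi>H[OF that] by blast
  qed
  define K where "K = {u\<in>U0. u \<in> H}"
  define G where "G = \<phi> ` U0"
  have U0a: "u \<in> U0 \<Longrightarrow> u \<in> ambient v" for u using U0_amb by blast
  have fc: "card U0 = card G * card K"
  proof -
    have "card U0 = card (\<phi> ` U0) * card {u\<in>U0. \<phi> u = 0}"
      by (rule fiber_count[OF finite_U0 U0_zero U0_diff]) (auto intro: \<phi>diff U0a)
    moreover have "{u\<in>U0. \<phi> u = 0} = K" using \<phi>0 U0a by (auto simp: K_def)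
    ultimately show ?thesis by (simp add: G_def)
  qed
  have shift: "card (B c) = 0 \<or> card (B c) = card K" for c
  proof (cases "B c = {}")
    case True thus ?thesis by simp
  next
    case False
    then obtain u0 where u0: "u0 \<in> U0" "aa c + u0 \<in> H" by (auto simp: B_def)
    have "B c = (\<lambda>k. u0 + k) ` K"
    proof (intro equalityI subsetI)
      fix u assume u: "u \<in> B c"
      hence "u - u0 \<in> U0" using U0_diff u0 by (auto simp: B_def)
      moreover have "(aa c + u) - (aa c + u0) \<in> H" using u u0 by (intro V.subspace_diff[OF Hs(1)]) (auto simp: B_def)
      ultimately have "u - u0 \<in> K" by (simp add: K_def)
      moreover have "u = u0 + (u - u0)" by simp
      ultimately show "u \<in> (\<lambda>k. u0 + k) ` K" by blast
    next
      fix u assume "u \<in> (\<lambda>k. u0 + k) ` K"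
      then obtain kk where kk: "kk \<in> K" "u = u0 + kk" by blast
      have "(aa c + u0) + kk \<in> H" using kk u0 by (rule_tac V.subspace_add[OF Hs(1)]) (auto simp: K_def)
      thus "u \<in> B c" using kk u0 U0_add by (auto simp: B_def K_def add.assoc)
    qed
    moreover have "card ((\<lambda>k. u0 + k) ` K) = card K" by (rule card_image) (auto intro: inj_onI)
    ultimately show ?thesis by simp
  qed
  have total: "card {P \<in> S. P \<subseteq> H} = (\<Sum>c\<in>T. card (B c))" using c1 c2 c3 by simp
  have pgt: "p > 1" using p prime_gt_1_nat by blast
  have Qp: "CARD('a) = p^(k*h)" using cardA q by (simp add: power_mult)
  show ?thesis
  proof (cases "G = UNIV")
    case True
    have each: "card (B c) = card K" if c: "c \<in> T" for c
    proof -
      obtain u0 where u0: "u0 \<in> U0" "\<phi> u0 = - \<phi> (aa c)" using True unfolding G_def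
        by (metis UNIV_I imageE)
      have "\<phi> (aa c + u0) = 0" using \<phi>add[OF aa_amb U0a[OF u0(1)]] u0(2) by simp
      hence "aa c + u0 \<in> H" using \<phi>0 V.subspace_add[OF ambs aa_amb U0a[OF u0(1)]] by blast
      hence "B c \<noteq> {}" using u0 by (auto simp: B_def)
      moreover have "finite (B c)" using finite_U0 by (simp add: B_def)
      ultimately show ?thesis using shift[of c] by auto
    qed
    have "card {P \<in> S. P \<subseteq> H} = q * card K" using total each cT by simp
    moreover have "CARD('a) * (q * card K) = CARD('a) * CARD('a)^r"
    proof -
      have "CARD('a) * (q * card K) = q * card U0" using fc True by simp
      also have "\<dots> = CARD('a)^(r+1)" using card_A_U0 card_A by simp
      finally show ?thesis by simp
    qed
    ultimately show ?thesis using Qp pgt by simp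
  next
    case False
    then obtain y where y: "y \<notin> G" by blast
    have Gdiff: "g - g' \<in> G" if gg: "g \<in> G" "g' \<in> G" for g g'
    proof -
      obtain u where u: "u \<in> U0" "g = \<phi> u" using gg(1) unfolding G_def by blast
      obtain u' where u': "u' \<in> U0" "g' = \<phi> u'" using gg(2) unfolding G_def by blast
      note uu = u(1) u'(1) u(2) u'(2)
      have "\<phi> (u - u') = g - g'" using \<phi>diff[OF U0a[OF uu(1)] U0a[OF uu(2)]] uu by simp
      thus ?thesis using U0_diff[OF uu(1,2)] unfolding G_def by (metis image_eqI)
    qed
    have Gsc: "t * g \<in> G" if tg: "t \<in> T" "g \<in> G" for t g
    proof -
      obtain u where u: "u \<in> U0" "g = \<phi> u" using tg(2) unfolding G_def by blast
      have "\<phi> (smul t u) = t * g" using \<phi>smul[OF U0a[OF u(1)]] u by simp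
      thus ?thesis using U0_smul[OF tg(1) u(1)] unfolding G_def by (metis image_eqI)
    qed
    have inj: "inj_on (\<lambda>(t,g). g + t * y) (T \<times> G)"
    proof (rule inj_onI, clarify)
      fix t g t' g' assume *: "t \<in> T" "g \<in> G" "t' \<in> T" "g' \<in> G" "g + t * y = g' + t' * y"
      show "t = t' \<and> g = g'"
      proof (cases "t = t'")
        case True thus ?thesis using *(5) by simp
      next
        case False
        have "(t - t') * y = g' - g" using *(5) by (simp add: algebra_simps)
        hence "inverse (t - t') * (g' - g) = y" using False by (simp add: field_simps)
        moreover have "inverse (t - t') * (g' - g) \<in> G"
          using Gsc[OF Tinv[OF Tdiff[OF *(1,3)]] Gdiff[OF *(4,2)]] .
        ultimately show ?thesis using y by simp
      qed
    qed
    have "card (T \<times> G) \<le> CARD('a)" using card_inj_on_le[OF inj _ fin] by simp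
    hence le1: "p^k * card G \<le> p^(k*h)" using cT q Qp by (simp add: card_cartesian_product)
    define N where "N = k * h * (r - 1) + k * (2 * h - 1)"
    have U0p: "card U0 = p ^ N" unfolding card_U0 Qp q N_def by (simp add: power_add power_mult)
    have "card G dvd p ^ N" using fc U0p by (metis dvd_triv_left)
    then obtain a where a: "a \<le> N" "card G = p ^ a" using divides_primepow_nat[OF p] by blast
    have Kp: "card K = p ^ (N - a)"
    proof -
      have "p ^ a * card K = p ^ a * p ^ (N - a)" using fc U0p a by (simp add: power_add[symmetric])
      thus ?thesis using pgt by simp
    qed
    have "p ^ (k + a) \<le> p ^ (k*h)" using le1 a by (simp add: power_add)
    hence ka: "k + a \<le> k * h" using pgt by simp
    have "k * h * r \<le> N - a"
    proof -
      have e1: "k * h * (r - 1) = k * h * r - k * h" by (simp add: diff_mult_distrib2)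
      have e2: "k * (2 * h - 1) = 2 * (k * h) - k" by (simp add: diff_mult_distrib2)
      have "k * h \<le> k * h * r" using r by simp
      moreover have "k \<le> 2 * (k * h)" using h by (simp add: le_add1 trans_le_add1)
      ultimately show ?thesis unfolding N_def e1 e2 using ka by linarith
    qed
    hence Kd: "CARD('a)^r dvd card K" unfolding Kp Qp by (simp add: power_mult[symmetric] le_imp_power_dvd)
    have "CARD('a)^r dvd (\<Sum>c\<in>T. card (B c))"
    proof (rule dvd_sum)
      fix c show "CARD('a)^r dvd card (B c)" using shift[of c] Kd by auto
    qed
    thus ?thesis using total by simp
  qed
qed

lemma divisible_S: "divisible v (CARD('a)^r) S"
  unfolding divisible_def
proof
  fix H :: "(nat \<Rightarrow> 'a) set" assume "H \<in> kspaces v (v - 1)"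
  hence "card {P \<in> S. P \<subseteq> H} mod CARD('a)^r = 0" using count_H by simp
  moreover have "card S mod CARD('a)^r = 0" using card_S card_A by simp
  ultimately show "card {P \<in> S. P \<subseteq> H} mod CARD('a)^r = card S mod CARD('a)^r" by simp
qed

end



theorem mainTheorem13:
  fixes q h r v :: nat
  assumes "\<exists>p k. prime p \<and> k \<ge> 1 \<and> q = p ^ k"
    and "h \<ge> 2" and "r \<ge> 1"
    and "2 * h + r \<le> v" and "v \<le> 2 * h + r + q - 2"
    and "CARD('a::field) = q ^ h"
  shows "\<not> gen_cylinder_conj TYPE('a) v r"
proof -
  obtain p k where pk: "prime p" "k \<ge> 1" "q = p ^ k" using assms(1) by blast
  have h1: "h \<ge> 1" using assms(2) by simp
  obtain T :: "'a set" where T: "card T = q" "0\<in>T" "1\<in>T"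
    "\<forall>x\<in>T. \<forall>y\<in>T. x+y\<in>T \<and> x*y\<in>T \<and> x-y\<in>T" "\<forall>x\<in>T. inverse x \<in> T"
    using subfield_exists[OF pk h1 assms(6)] by blast
  have q1: "q > 1"
  proof -
    have "p > 1" using pk(1) prime_gt_1_nat by blast
    thus ?thesis using pk one_less_power[of p k] by simp
  qed
  have cpos: "CARD('a) > 0" using assms(6) q1 by simp
  hence fin: "finite (UNIV :: 'a set)" using card_ge_0_finite by blast
  define e where "e = v - (r + 2*h)"
  have v: "v = r + 2*h + e" using assms(4) by (simp add: e_def)
  have eq: "e \<le> q - 2" using assms(5) q1 by (simp add: e_def)
  have finT: "finite T" by (rule finite_subset[OF subset_UNIV fin])
  have "card (T - {0,1}) = q - 2" using T(1-3) finT by (simp add: card_Diff_subset)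
  hence "card {..<e} \<le> card (T - {0,1})" using eq by simp
  then obtain ct where ct: "ct ` {..<e} \<subseteq> T - {0,1}" "inj_on ct {..<e}"
    using card_le_inj[of "{..<e}" "T - {0,1}"] finT by auto
  interpret C: constr T p k q h r v e ct
    using fin assms(6) pk assms(2,3) v T ct by unfold_locales auto
  show ?thesis
    unfolding gen_cylinder_conj_def
    using C.S_points C.card_S C.card_A C.divisible_S C.spanning_S C.not_cyl by metis
qed


end
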